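(* Let $P$ be a finite subset of $\mathbb{S}^n$ without antipodal pairs and let $a\in\mathbb{R}$. If the function $x\mapsto d_{\mathbb{S}^n}(x,P)+a$ belongs to $\mathbf{E}(\mathbb{S}^n)$, then $a=\frac12\mathrm{diam}(P)$ and $P$ is pointwise extremal.
   Context: $\mathbb{S}^n$ is the unit $n$-sphere with geodesic metric $d_{\mathbb{S}^n}$; $d_{\mathbb{S}^n}(x,P)=\min_{p\in P}d_{\mathbb{S}^n}(x,p)$. For a metric space $X$, $\Delta(X)=\{f:X\to\mathbb{R}\text{ bounded}:f(x)+f(x')\ge d_X(x,x')\}$ and the tight span $\mathbf{E}(X)$ is the set of pointwise-minimal elements of $\Delta(X)$. For $p\in P$, $\mathrm{comax}_P(p)=\{p'\in P:d_{\mathbb{S}^n}(p,p')=\mathrm{diam}(P)\}$. A point $p\in P$ is held by $P$ if for every tangent vector $v\in T_p\mathbb{S}^n$ there is $p'\in\mathrm{comax}_P(p)$ with $\langle v,\exp_p^{-1}(p')\rangle\ge0$, where $\exp_p^{-1}(p')$ is the unit tangent vector at $p$ of the shortest geodesic from $p$ to $p'$. $P$ is pointwise extremal if every point of $P$ is held by $P$. *)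

theory Defs
  imports "HOL-Analysis.Analysis"
begin

text \<open>The unit n-sphere is modelled as sphere 0 1 in a Euclidean space 'a
  of dimension n+1.  Geodesic distance between unit vectors.\<close>

definition sdist :: "'a::euclidean_space \<Rightarrow> 'a \<Rightarrow> real" where
  "sdist x y = arccos (x \<bullet> y)"

definition sdist_set :: "'a::euclidean_space \<Rightarrow> 'a set \<Rightarrow> real" where
  "sdist_set x P = Min ((\<lambda>p. sdist x p) ` P)"

definition sdiam :: "'a::euclidean_space set \<Rightarrow> real" where
  "sdiam P = Sup {sdist p q | p q. p \<in> P \<and> q \<in> P}"

definition Delta :: "'b set \<Rightarrow> ('b \<Rightarrow> 'b \<Rightarrow> real) \<Rightarrow> ('b \<Rightarrow> real) set" where
  "Delta X d = {f. bounded (f ` X) \<and> (\<forall>x\<in>X. \<forall>x'\<in>X. f x + f x' \<ge> d x x')}"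

definition tight_span :: "'b set \<Rightarrow> ('b \<Rightarrow> 'b \<Rightarrow> real) \<Rightarrow> ('b \<Rightarrow> real) set" where
  "tight_span X d = {f \<in> Delta X d. \<forall>g \<in> Delta X d.
      (\<forall>x\<in>X. g x \<le> f x) \<longrightarrow> (\<forall>x\<in>X. g x = f x)}"

definition comax :: "'a::euclidean_space set \<Rightarrow> 'a \<Rightarrow> 'a set" where
  "comax P p = {q \<in> P. sdist p q = sdiam P}"

text \<open>Inverse exponential map direction: unit tangent vector at p of the
  shortest geodesic from p to q (zero vector when q = p).\<close>

definition slog_dir :: "'a::euclidean_space \<Rightarrow> 'a \<Rightarrow> 'a" where
  "slog_dir p q = sgn (q - (p \<bullet> q) *\<^sub>R p)"

definition held :: "'a::euclidean_space set \<Rightarrow> 'a \<Rightarrow> bool" where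
  "held P p \<longleftrightarrow> (\<forall>v. v \<bullet> p = 0 \<longrightarrow> (\<exists>q \<in> comax P p. v \<bullet> slog_dir p q \<ge> 0))"

definition pointwise_extremal :: "'a::euclidean_space set \<Rightarrow> bool" where
  "pointwise_extremal P \<longleftrightarrow> (\<forall>p\<in>P. held P p)"

end

theory Submission
  imports Defs
begin

lemma unit_inner_abs: "norm (x::'a::euclidean_space) = 1 \<Longrightarrow> norm y = 1 \<Longrightarrow> \<bar>x \<bullet> y\<bar> \<le> 1"
  by (metis Cauchy_Schwarz_ineq2 mult_1)

lemma sdist_sym: "sdist x y = sdist y x"
  by (simp add: sdist_def inner_commute)

lemma sdist_nonneg: "norm (x::'a::euclidean_space) = 1 \<Longrightarrow> norm y = 1 \<Longrightarrow> 0 \<le> sdist x y"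
  unfolding sdist_def using unit_inner_abs[of x y] by (intro arccos_lbound) auto

lemma sdist_le_pi: "norm (x::'a::euclidean_space) = 1 \<Longrightarrow> norm y = 1 \<Longrightarrow> sdist x y \<le> pi"
  unfolding sdist_def using unit_inner_abs[of x y] by (intro arccos_ubound) auto

lemma sdist_self: "norm (x::'a::euclidean_space) = 1 \<Longrightarrow> sdist x x = 0"
  unfolding sdist_def by (simp add: inner_commute power2_norm_eq_inner[symmetric])

lemma cos_sdist: "norm (x::'a::euclidean_space) = 1 \<Longrightarrow> norm y = 1 \<Longrightarrow> cos (sdist x y) = x \<bullet> y"
  unfolding sdist_def using unit_inner_abs[of x y] by (simp add: cos_arccos_abs)

lemma sdist_zero_imp: "norm (x::'a::euclidean_space) = 1 \<Longrightarrow> norm y = 1 \<Longrightarrow> sdist x y = 0 \<Longrightarrow> x = y"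
proof -
  assume h: "norm x = 1" "norm y = 1" "sdist x y = 0"
  have "x \<bullet> y = 1" using cos_sdist[OF h(1,2)] h(3) by simp
  moreover have "x \<bullet> x = 1" "y \<bullet> y = 1" using h(1,2) by (simp_all add: norm_eq_1)
  ultimately have "(x - y) \<bullet> (x - y) = 0"
    by (simp add: inner_diff_left inner_diff_right inner_commute)
  then show "x = y" by simp
qed

lemma sdist_pi_imp: "norm (x::'a::euclidean_space) = 1 \<Longrightarrow> norm y = 1 \<Longrightarrow> sdist x y = pi \<Longrightarrow> y = - x"
proof -
  assume h: "norm x = 1" "norm y = 1" "sdist x y = pi"
  have "x \<bullet> y = -1" using cos_sdist[OF h(1,2)] h(3) by simp
  moreover have "x \<bullet> x = 1" "y \<bullet> y = 1" using h(1,2) by (simp_all add: norm_eq_1)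
  ultimately have "(x + y) \<bullet> (x + y) = 0"
    by (simp add: inner_add_left inner_add_right inner_commute)
  then have "x + y = 0" by simp
  then show "y = - x" by (simp add: add_eq_0_iff)
qed

lemma sdist_triangle:
  fixes x y z :: "'a::euclidean_space"
  assumes x: "norm x = 1" and y: "norm y = 1" and z: "norm z = 1"
  shows "sdist x z \<le> sdist x y + sdist y z"
proof (cases "sdist x y + sdist y z \<le> pi")
  case False
  then show ?thesis using sdist_le_pi[OF x z] by linarith
next
  case True
  define \<alpha> where "\<alpha> = sdist x y"
  define \<beta> where "\<beta> = sdist y z"
  have a0: "0 \<le> \<alpha>" "\<alpha> \<le> pi" using sdist_nonneg[OF x y] sdist_le_pi[OF x y] \<alpha>_def by auto
  have b0: "0 \<le> \<beta>" "\<beta> \<le> pi" using sdist_nonneg[OF y z] sdist_le_pi[OF y z] \<beta>_def by auto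
  have ca: "cos \<alpha> = x \<bullet> y" using cos_sdist[OF x y] \<alpha>_def by simp
  have cb: "cos \<beta> = y \<bullet> z" using cos_sdist[OF y z] \<beta>_def by simp
  have sa: "sin \<alpha> = sqrt (1 - (x \<bullet> y)^2)"
    unfolding \<alpha>_def sdist_def using unit_inner_abs[OF x y] by (simp add: sin_arccos_abs)
  have sb: "sin \<beta> = sqrt (1 - (y \<bullet> z)^2)"
    unfolding \<beta>_def sdist_def using unit_inner_abs[OF y z] by (simp add: sin_arccos_abs)
  define x' where "x' = x - (x \<bullet> y) *\<^sub>R y"
  define z' where "z' = z - (z \<bullet> y) *\<^sub>R y"
  have yy: "y \<bullet> y = 1" using y by (simp add: power2_norm_eq_inner[symmetric])
  have xx: "x \<bullet> x = 1" using x by (simp add: power2_norm_eq_inner[symmetric])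
  have zz: "z \<bullet> z = 1" using z by (simp add: power2_norm_eq_inner[symmetric])
  have nx: "norm x' = sqrt (1 - (x \<bullet> y)^2)"
  proof -
    have "norm x' ^ 2 = 1 - (x \<bullet> y)^2"
      unfolding x'_def power2_norm_eq_inner using xx yy
      by (simp add: inner_diff inner_commute power2_eq_square algebra_simps)
    then show ?thesis by (metis norm_ge_zero real_sqrt_unique)
  qed
  have nz: "norm z' = sqrt (1 - (y \<bullet> z)^2)"
  proof -
    have "norm z' ^ 2 = 1 - (y \<bullet> z)^2"
      unfolding z'_def power2_norm_eq_inner using zz yy
      by (simp add: inner_diff inner_commute power2_eq_square algebra_simps)
    then show ?thesis by (metis norm_ge_zero real_sqrt_unique)
  qed
  have xz: "x' \<bullet> z' = x \<bullet> z - (x \<bullet> y) * (y \<bullet> z)"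
    unfolding x'_def z'_def using yy
    by (simp add: inner_diff inner_commute algebra_simps)
  have "- (norm x' * norm z') \<le> x' \<bullet> z'"
    using Cauchy_Schwarz_ineq2[of x' z'] by linarith
  then have key: "cos (\<alpha> + \<beta>) \<le> x \<bullet> z"
    unfolding cos_add ca cb sa sb using nx nz xz by (simp add: inner_commute)
  have "sdist x z = arccos (x \<bullet> z)" by (simp add: sdist_def)
  also have "\<dots> \<le> arccos (cos (\<alpha> + \<beta>))"
    using key unit_inner_abs[OF x z] by (intro arccos_le_arccos) auto
  also have "\<dots> = \<alpha> + \<beta>" using True a0 b0 \<alpha>_def \<beta>_def by (intro arccos_cos) auto
  finally show ?thesis using \<alpha>_def \<beta>_def by simp
qed


lemma sdist_set_le: "finite P \<Longrightarrow> q \<in> P \<Longrightarrow> sdist_set x P \<le> sdist x q"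
  unfolding sdist_set_def by (intro Min_le) auto

lemma sdist_set_ex: "finite P \<Longrightarrow> P \<noteq> {} \<Longrightarrow> \<exists>q\<in>P. sdist_set x P = sdist x q"
proof -
  assume h: "finite P" "P \<noteq> {}"
  have "Min ((\<lambda>p. sdist x p) ` P) \<in> (\<lambda>p. sdist x p) ` P" using h by (intro Min_in) auto
  then show ?thesis unfolding sdist_set_def by auto
qed

lemma sdist_set_self: "finite P \<Longrightarrow> P \<subseteq> sphere 0 1 \<Longrightarrow> (p::'a::euclidean_space) \<in> P \<Longrightarrow> sdist_set p P = 0"
proof -
  assume h: "finite P" "P \<subseteq> sphere 0 1" "p \<in> P"
  have "sdist_set p P \<le> 0" using sdist_set_le[OF h(1,3), of p] sdist_self[of p] h by auto
  moreover obtain q where "q \<in> P" "sdist_set p P = sdist p q" using sdist_set_ex[of P p] h by auto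
  moreover have "0 \<le> sdist p q" using \<open>q \<in> P\<close> h by (intro sdist_nonneg) auto
  ultimately show ?thesis by linarith
qed

lemma sdiam_upper: "finite (P::'a::euclidean_space set) \<Longrightarrow> p \<in> P \<Longrightarrow> q \<in> P \<Longrightarrow> sdist p q \<le> sdiam P"
  unfolding sdiam_def
proof (intro cSup_upper)
  assume "finite P"
  then have "finite ((\<lambda>(p,q). sdist p q) ` (P \<times> P))" by auto
  moreover have "{sdist p q | p q. p \<in> P \<and> q \<in> P} = (\<lambda>(p,q). sdist p q) ` (P \<times> P)" by auto
  ultimately show "bdd_above {sdist p q | p q. p \<in> P \<and> q \<in> P}" by (metis bdd_above_finite)
qed auto

lemma sdiam_least: "P \<noteq> {} \<Longrightarrow> (\<And>p q. p \<in> P \<Longrightarrow> q \<in> P \<Longrightarrow> sdist p q \<le> c) \<Longrightarrow> sdiam (P::'a::euclidean_space set) \<le> c"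
proof -
  assume h: "P \<noteq> {}" "\<And>p q. p \<in> P \<Longrightarrow> q \<in> P \<Longrightarrow> sdist p q \<le> c"
  obtain p where "p \<in> P" using h by auto
  then have "{sdist p q | p q. p \<in> P \<and> q \<in> P} \<noteq> {}" by blast
  then show ?thesis unfolding sdiam_def using h(2) by (intro cSup_least) auto
qed

lemma sdiam_in: "finite (P::'a::euclidean_space set) \<Longrightarrow> P \<noteq> {} \<Longrightarrow> \<exists>p\<in>P. \<exists>q\<in>P. sdiam P = sdist p q"
proof -
  assume h: "finite P" "P \<noteq> {}"
  have e: "{sdist p q | p q. p \<in> P \<and> q \<in> P} = (\<lambda>(p,q). sdist p q) ` (P \<times> P)" by auto
  have f: "finite ((\<lambda>(p,q). sdist p q) ` (P \<times> P))" using h by auto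
  have n: "(\<lambda>(p,q). sdist p q) ` (P \<times> P) \<noteq> {}" using h by auto
  have "sdiam P = Max ((\<lambda>(p,q). sdist p q) ` (P \<times> P))"
    unfolding sdiam_def e using cSup_eq_Max[OF f n] by simp
  moreover have "Max ((\<lambda>(p,q). sdist p q) ` (P \<times> P)) \<in> (\<lambda>(p,q). sdist p q) ` (P \<times> P)"
    using Max_in[OF f n] .
  ultimately show ?thesis by auto
qed

lemma lemmaA:
  fixes P :: "'a::euclidean_space set" and a :: real
  assumes fin: "finite P" and ne: "P \<noteq> {}" and sub: "P \<subseteq> sphere 0 1"
    and ts: "(\<lambda>x. sdist_set x P + a) \<in> tight_span (sphere 0 1) sdist"
    and x0: "x0 \<in> sphere 0 1"
  shows "\<exists>q\<in>P. sdist_set x0 P + 2 * a \<le> sdist x0 q"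
proof (rule ccontr)
  assume "\<not> ?thesis"
  then have lt: "\<forall>q\<in>P. sdist x0 q < sdist_set x0 P + 2 * a" by auto
  define f where "f = (\<lambda>x. sdist_set x P + a)"
  define M where "M = Max ((\<lambda>q. sdist x0 q) ` P)"
  obtain qm where qm: "qm \<in> P" "M = sdist x0 qm"
  proof -
    have "M \<in> (\<lambda>q. sdist x0 q) ` P" unfolding M_def using fin ne by (intro Max_in) auto
    then show ?thesis using that by auto
  qed
  have Mge: "\<And>q. q \<in> P \<Longrightarrow> sdist x0 q \<le> M" unfolding M_def using fin by (intro Max_ge) auto
  define d0 where "d0 = sdist_set x0 P"
  have "M < d0 + 2 * a" using lt qm d0_def by auto
  define \<delta> where "\<delta> = d0 + 2 * a - M"
  have \<delta>pos: "\<delta> > 0" using \<open>M < d0 + 2 * a\<close> \<delta>_def by simp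
  have "norm qm = 1" using qm(1) sub by auto
  then have M0: "0 \<le> M" using qm(2) x0 sdist_nonneg[of x0 qm] by simp
  obtain qd where qd: "qd \<in> P" "d0 = sdist x0 qd" using sdist_set_ex[OF fin ne, of x0] d0_def by auto
  have "norm qd = 1" using qd(1) sub by auto
  then have d00: "0 \<le> d0" using qd(2) x0 sdist_nonneg[of x0 qd] by simp
  have fpos: "f x0 > 0" unfolding f_def d0_def[symmetric] using \<delta>pos \<delta>_def M0 d00 by linarith
  define \<epsilon> where "\<epsilon> = min \<delta> (f x0)"
  have epos: "\<epsilon> > 0" using \<delta>pos fpos \<epsilon>_def by simp
  define g where "g = f(x0 := f x0 - \<epsilon>)"
  have fD: "f \<in> Delta (sphere 0 1) sdist" and fmin: "\<forall>g \<in> Delta (sphere 0 1) sdist.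
      (\<forall>x\<in>sphere 0 1. g x \<le> f x) \<longrightarrow> (\<forall>x\<in>sphere 0 1. g x = f x)"
    using ts unfolding tight_span_def f_def by auto
  have key: "sdist x0 y \<le> f x0 - \<epsilon> + f y" if y: "y \<in> sphere 0 1" for y
  proof -
    obtain q where q: "q \<in> P" "sdist_set y P = sdist y q" using sdist_set_ex[OF fin ne] by blast
    have "sdist x0 y \<le> sdist x0 q + sdist q y"
      using q sub x0 y by (intro sdist_triangle) auto
    also have "\<dots> \<le> M + sdist_set y P" using Mge[OF q(1)] q(2) sdist_sym[of q y] by simp
    also have "\<dots> \<le> f x0 - \<epsilon> + f y" unfolding f_def using \<epsilon>_def \<delta>_def d0_def by simp
    finally show ?thesis .
  qed
  have gD: "g \<in> Delta (sphere 0 1) sdist"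
    unfolding Delta_def
  proof (intro CollectI conjI ballI)
    have "g ` sphere 0 1 \<subseteq> insert (f x0 - \<epsilon>) (f ` sphere 0 1)" unfolding g_def by auto
    moreover have "bounded (f ` sphere 0 1)" using fD unfolding Delta_def by auto
    ultimately show "bounded (g ` sphere 0 1)" by (meson bounded_insert bounded_subset)
  next
    fix x x' assume xs: "x \<in> sphere (0::'a) 1" and xs': "x' \<in> sphere (0::'a) 1"
    have fxx: "sdist x x' \<le> f x + f x'" using fD xs xs' unfolding Delta_def by auto
    show "sdist x x' \<le> g x + g x'"
    proof (cases "x = x0")
      case True
      show ?thesis
      proof (cases "x' = x0")
        case True
        have "sdist x x' = 0" using \<open>x = x0\<close> True x0 by (simp add: sdist_self)
        then show ?thesis using \<open>x = x0\<close> True g_def \<epsilon>_def by simp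
      next
        case False
        then show ?thesis using key[OF xs'] \<open>x = x0\<close> g_def by simp
      qed
    next
      case False
      show ?thesis
      proof (cases "x' = x0")
        case True
        then show ?thesis using key[OF xs] False g_def sdist_sym[of x x0] by simp
      next
        case False
        then show ?thesis using fxx \<open>x \<noteq> x0\<close> g_def by simp
      qed
    qed
  qed
  have "\<forall>x\<in>sphere 0 1. g x \<le> f x" unfolding g_def using epos by auto
  then have "g x0 = f x0" using fmin gD x0 by blast
  then show False using epos g_def by simp
qed


lemma inner_sgn_neg: "v \<bullet> sgn w < 0 \<Longrightarrow> v \<bullet> (w::'a::euclidean_space) < 0"
proof (cases "w = 0")
  case False
  assume h: "v \<bullet> sgn w < 0"
  have "v \<bullet> sgn w = (v \<bullet> w) / norm w" by (simp add: sgn_div_norm divide_inverse_commute)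
  then show ?thesis using h False by (simp add: divide_less_0_iff)
qed simp

theorem proposition4p8:
  fixes P :: "'a::euclidean_space set" and a :: real
  assumes "finite P" and "P \<noteq> {}" and "P \<subseteq> sphere 0 1"
    and "\<forall>p\<in>P. - p \<notin> P"
    and "(\<lambda>x. sdist_set x P + a) \<in> tight_span (sphere 0 1) sdist"
  shows "a = sdiam P / 2 \<and> pointwise_extremal P"
proof -
  note fin = assms(1) and ne = assms(2) and sub = assms(3) and ts = assms(5)
  define D where "D = sdiam P"
  have unitP: "\<And>q. q \<in> P \<Longrightarrow> norm q = 1" using sub by auto
  have fD: "\<forall>x\<in>sphere 0 1. \<forall>x'\<in>sphere 0 1. sdist x x' \<le> (sdist_set x P + a) + (sdist_set x' P + a)"
    using ts unfolding tight_span_def Delta_def by auto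
  have le1: "D \<le> 2 * a" unfolding D_def
  proof (rule sdiam_least[OF ne])
    fix p q assume p: "p \<in> P" and q: "q \<in> P"
    have "sdist p q \<le> (sdist_set p P + a) + (sdist_set q P + a)" using fD p q unitP by auto
    then show "sdist p q \<le> 2 * a" using sdist_set_self[OF fin sub p] sdist_set_self[OF fin sub q] by simp
  qed
  obtain p0 where p0: "p0 \<in> P" using ne by auto
  obtain q0 where q0: "q0 \<in> P" "sdist_set p0 P + 2 * a \<le> sdist p0 q0"
    using lemmaA[OF fin ne sub ts, of p0] p0 unitP by auto
  have "2 * a \<le> D" using q0 sdist_set_self[OF fin sub p0] sdiam_upper[OF fin p0 q0(1)] D_def by simp
  then have aeq: "a = D / 2" using le1 by simp
  obtain p1 q1 where pq1: "p1 \<in> P" "q1 \<in> P" "D = sdist p1 q1" using sdiam_in[OF fin ne] D_def by auto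
  have "D \<le> pi" using pq1 unitP sdist_le_pi by metis
  moreover have "D \<noteq> pi"
  proof
    assume "D = pi"
    then have "q1 = - p1" using pq1 unitP sdist_pi_imp by metis
    then show False using assms(4) pq1 by auto
  qed
  ultimately have Dlt: "D < pi" by simp
  have D0: "0 \<le> D" using pq1 unitP sdist_nonneg by metis
  show ?thesis
  proof
    show "a = sdiam P / 2" using aeq D_def by simp
  next
    show "pointwise_extremal P"
      unfolding pointwise_extremal_def held_def
    proof (intro ballI allI impI)
      fix p v assume p: "p \<in> P" and vp: "v \<bullet> p = 0"
      show "\<exists>q\<in>comax P p. 0 \<le> v \<bullet> slog_dir p q"
      proof (rule ccontr)
        assume "\<not> ?thesis"
        then have neg: "\<forall>q\<in>comax P p. v \<bullet> slog_dir p q < 0" by auto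
        have vq: "v \<bullet> q < 0" if "q \<in> comax P p" for q
        proof -
          have "v \<bullet> sgn (q - (p \<bullet> q) *\<^sub>R p) < 0" using neg that slog_dir_def by metis
          then have "v \<bullet> (q - (p \<bullet> q) *\<^sub>R p) < 0" by (rule inner_sgn_neg)
          then show ?thesis using vp by (simp add: inner_diff_right inner_commute)
        qed
        obtain qa where qa: "qa \<in> P" "sdist_set p P + 2 * a \<le> sdist p qa"
          using lemmaA[OF fin ne sub ts, of p] p unitP by auto
        have "sdist p qa = D" using qa sdist_set_self[OF fin sub p] sdiam_upper[OF fin p qa(1)] aeq D_def by simp
        then have "qa \<in> comax P p" unfolding comax_def using qa D_def by simp
        then have "v \<noteq> 0" using neg by fastforce
        define u where "u = - ((1 / norm v) *\<^sub>R v)"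
        have nu: "norm u = 1" using \<open>v \<noteq> 0\<close> u_def by simp
        have up: "u \<bullet> p = 0" using vp u_def by simp
        have uq: "u \<bullet> q > 0" if "q \<in> comax P p" for q
          using vq[OF that] \<open>v \<noteq> 0\<close> u_def by (simp add: divide_less_0_iff)
        have pos: "0 < sdist p q / 2" if "q \<in> P - {p}" for q
        proof -
          have qP: "q \<in> P" "q \<noteq> p" using that by auto
          have "0 \<le> sdist p q" using sdist_nonneg[OF unitP[OF p] unitP[OF qP(1)]] .
          moreover have "sdist p q \<noteq> 0" using sdist_zero_imp[OF unitP[OF p] unitP[OF qP(1)]] qP(2) by metis
          ultimately show ?thesis by simp
        qed
        define r where "r = Min (insert (pi - D) ((\<lambda>q. sdist p q / 2) ` (P - {p})))"
        have rpos: "0 < r" unfolding r_def using fin Dlt pos by (subst Min_gr_iff) auto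
        have rle1: "r \<le> pi - D" unfolding r_def using fin by (intro Min_le) auto
        have rle2: "r \<le> sdist p q / 2" if "q \<in> P - {p}" for q
          unfolding r_def using fin that by (intro Min_le) auto
        define t where "t = r / 2"
        have t0: "0 < t" "t < pi - D" using rpos rle1 t_def by auto
        have t2: "2 * t \<le> sdist p q" if "q \<in> P - {p}" for q using rle2[OF that] t_def rpos by simp
        define x where "x = cos t *\<^sub>R p + sin t *\<^sub>R u"
        have pp: "p \<bullet> p = 1" using unitP[OF p] by (simp add: norm_eq_1[symmetric])
        have uu: "u \<bullet> u = 1" using nu by (simp add: norm_eq_1[symmetric])
        have "x \<bullet> x = (cos t)^2 + (sin t)^2"
          unfolding x_def using pp uu up
          by (simp add: inner_add_left inner_add_right inner_commute power2_eq_square)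
        then have nx: "norm x = 1" by (simp add: norm_eq_1)
        have xp: "x \<bullet> p = cos t" unfolding x_def using pp up by (simp add: inner_add_left)
        have sxp: "sdist x p = t" unfolding sdist_def xp using t0 D0 by (intro arccos_cos) auto
        have dxP: "t \<le> sdist_set x P"
        proof -
          obtain q' where q': "q' \<in> P" "sdist_set x P = sdist x q'" using sdist_set_ex[OF fin ne] by blast
          show ?thesis
          proof (cases "q' = p")
            case True then show ?thesis using q' sxp by simp
          next
            case False
            have "sdist p q' \<le> sdist p x + sdist x q'"
              using unitP[OF p] nx unitP[OF q'(1)] by (rule sdist_triangle)
            then show ?thesis using t2[of q'] False q' sxp sdist_sym[of p x] by simp
          qed
        qed
        obtain q where q: "q \<in> P" "sdist_set x P + 2 * a \<le> sdist x q"
          using lemmaA[OF fin ne sub ts, of x] nx by auto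
        have big: "t + D \<le> sdist x q" using q dxP aeq by simp
        show False
        proof (cases "q \<in> comax P p")
          case True
          have sD: "sdist p q = D" using True unfolding comax_def D_def by simp
          have pq: "p \<bullet> q = cos D" using cos_sdist[OF unitP[OF p] unitP[OF q(1)]] sD by simp
          have xq: "x \<bullet> q = cos t * cos D + sin t * (u \<bullet> q)"
            unfolding x_def using pq by (simp add: inner_add_left)
          have st: "sin t > 0" using t0 D0 by (intro sin_gt_zero) auto
          have sDp: "sin D \<ge> 0" using D0 Dlt by (intro sin_ge_zero) auto
          have "sin t * (u \<bullet> q) > 0" using st uq[OF True] by simp
          moreover have "sin t * sin D \<ge> 0" using st sDp by simp
          ultimately have "cos (t + D) < x \<bullet> q" unfolding cos_add xq by linarith
          then have "arccos (x \<bullet> q) < arccos (cos (t + D))"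
            using unit_inner_abs[OF nx unitP[OF q(1)]] by (intro arccos_less_arccos) auto
          also have "\<dots> = t + D" using t0 D0 by (intro arccos_cos) auto
          finally show False using big sdist_def by (metis not_less)
        next
          case False
          have "sdist p q \<le> D" using sdiam_upper[OF fin p q(1)] D_def by simp
          moreover have "sdist p q \<noteq> D" using False q(1) unfolding comax_def D_def by simp
          moreover have "sdist x q \<le> sdist x p + sdist p q"
            using nx unitP[OF p] unitP[OF q(1)] by (rule sdist_triangle)
          ultimately show False using big sxp by simp
        qed
      qed
    qed
  qed
qed

end
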